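(* Let $p$ be a prime and let $A$, $B$ be nontrivial finite $p$-groups. Let $p^d$ be the maximum order of an element of $A$. Then $$a(B)\le a(A\wr B)\le p^d a(B).$$
   Context: For a finite group $G$, the average order is $a(G)=\frac{1}{|G|}\sum_{g\in G}\mathrm{order}(g)$. For groups $A,B$, let $K=\prod_{b\in B}A$, on which $B$ acts by $x\cdot(\alpha_b)_b=(\alpha_{x^{-1}b})_b$ for $x\in B$; the wreath product $A\wr B$ is the semidirect product $K\rtimes B$ for this action. *)

theory Defs
  imports "HOL-Algebra.Algebra"
begin

definition avg_order :: "('a, 'b) monoid_scheme \<Rightarrow> real" where
  "avg_order G = (\<Sum>g\<in>carrier G. real (group.ord G g)) / real (card (carrier G))"

definition p_group :: "nat \<Rightarrow> ('a, 'b) monoid_scheme \<Rightarrow> bool" where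
  "p_group p G \<longleftrightarrow> group G \<and> finite (carrier G) \<and> (\<exists>k. card (carrier G) = p ^ k)"

text \<open>Wreath product A wr B = K \<rtimes> B, K = functions carrier B \<rightarrow> carrier A (extensional),
  with action (x.alpha)(b) = alpha(inverse x * b); product (f,x)(g,y) = (f (x.g), xy).\<close>
definition wreath :: "('a, 'c) monoid_scheme \<Rightarrow> ('b, 'd) monoid_scheme
    \<Rightarrow> (('b \<Rightarrow> 'a) \<times> 'b) monoid" where
  "wreath A B = \<lparr> carrier = (carrier B \<rightarrow>\<^sub>E carrier A) \<times> carrier B,
     monoid.mult = (\<lambda>(f, x) (g, y). ((\<lambda>c\<in>carrier B. f c \<otimes>\<^bsub>A\<^esub> g (inv\<^bsub>B\<^esub> x \<otimes>\<^bsub>B\<^esub> c)),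
                               x \<otimes>\<^bsub>B\<^esub> y)),
     monoid.one = ((\<lambda>c\<in>carrier B. \<one>\<^bsub>A\<^esub>), \<one>\<^bsub>B\<^esub>) \<rparr>"

end

theory Submission
  imports Defs "HOL-Computational_Algebra.Primes"
begin

lemma wreath_carrier[simp]: "carrier (wreath A B) = (carrier B \<rightarrow>\<^sub>E carrier A) \<times> carrier B"
  by (simp add: wreath_def)

lemma wreath_mult[simp]: "(f, x) \<otimes>\<^bsub>wreath A B\<^esub> (g, y) =
   ((\<lambda>c\<in>carrier B. f c \<otimes>\<^bsub>A\<^esub> g (inv\<^bsub>B\<^esub> x \<otimes>\<^bsub>B\<^esub> c)), x \<otimes>\<^bsub>B\<^esub> y)"
  by (simp add: wreath_def)

lemma wreath_one[simp]: "\<one>\<^bsub>wreath A B\<^esub> = ((\<lambda>c\<in>carrier B. \<one>\<^bsub>A\<^esub>), \<one>\<^bsub>B\<^esub>)"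
  by (simp add: wreath_def)

lemma wreath_group:
  assumes "group A" "group B"
  shows "group (wreath A B)"
proof -
  interpret A: group A by fact
  interpret B: group B by fact
  show ?thesis
  proof (rule groupI)
    fix u v assume "u \<in> carrier (wreath A B)" "v \<in> carrier (wreath A B)"
    then show "u \<otimes>\<^bsub>wreath A B\<^esub> v \<in> carrier (wreath A B)"
      by (cases u; cases v) (auto simp: PiE_iff)
  next
    show "\<one>\<^bsub>wreath A B\<^esub> \<in> carrier (wreath A B)" by auto
  next
    fix u v w assume "u \<in> carrier (wreath A B)" "v \<in> carrier (wreath A B)" "w \<in> carrier (wreath A B)"
    then show "u \<otimes>\<^bsub>wreath A B\<^esub> v \<otimes>\<^bsub>wreath A B\<^esub> w = u \<otimes>\<^bsub>wreath A B\<^esub> (v \<otimes>\<^bsub>wreath A B\<^esub> w)"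
      by (cases u; cases v; cases w)
         (auto simp: PiE_iff B.inv_mult_group B.m_assoc A.m_assoc intro!: restrict_ext)
  next
    fix u assume "u \<in> carrier (wreath A B)"
    then show "\<one>\<^bsub>wreath A B\<^esub> \<otimes>\<^bsub>wreath A B\<^esub> u = u"
      proof (cases u)
      case (Pair f x)
      with \<open>u \<in> _\<close> have f: "f \<in> carrier B \<rightarrow>\<^sub>E carrier A" and x: "x \<in> carrier B" by auto
      have "(\<lambda>c\<in>carrier B. (\<lambda>c\<in>carrier B. \<one>\<^bsub>A\<^esub>) c \<otimes>\<^bsub>A\<^esub> f (inv\<^bsub>B\<^esub> \<one>\<^bsub>B\<^esub> \<otimes>\<^bsub>B\<^esub> c)) = f"
      proof
        fix c show "(\<lambda>c\<in>carrier B. (\<lambda>c\<in>carrier B. \<one>\<^bsub>A\<^esub>) c \<otimes>\<^bsub>A\<^esub> f (inv\<^bsub>B\<^esub> \<one>\<^bsub>B\<^esub> \<otimes>\<^bsub>B\<^esub> c)) c = f c"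
          proof (cases "c \<in> carrier B")
          case True then show ?thesis using f by (auto simp: PiE_iff)
        next
          case False then show ?thesis using PiE_arb[OF f False] by simp
        qed
      qed
      then show ?thesis using Pair x by simp
    qed
  next
    fix u assume "u \<in> carrier (wreath A B)"
    then obtain f x where u: "u = (f, x)" "f \<in> carrier B \<rightarrow>\<^sub>E carrier A" "x \<in> carrier B"
      by auto
    define g where "g = (\<lambda>c\<in>carrier B. inv\<^bsub>A\<^esub> (f (x \<otimes>\<^bsub>B\<^esub> c)))"
    have "(g, inv\<^bsub>B\<^esub> x) \<in> carrier (wreath A B)" using u by (auto simp: g_def PiE_iff)
    moreover have "(g, inv\<^bsub>B\<^esub> x) \<otimes>\<^bsub>wreath A B\<^esub> u = \<one>\<^bsub>wreath A B\<^esub>"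
      using u by (auto simp: g_def PiE_iff B.m_assoc[symmetric] intro!: restrict_ext)
    ultimately show "\<exists>y\<in>carrier (wreath A B). y \<otimes>\<^bsub>wreath A B\<^esub> u = \<one>\<^bsub>wreath A B\<^esub>" by blast
  qed
qed

lemma wreath_mult_snd:
  "snd (u \<otimes>\<^bsub>wreath A B\<^esub> v) = snd u \<otimes>\<^bsub>B\<^esub> snd v"
  by (cases u; cases v) simp

lemma wreath_pow_snd:
  "snd (w [^]\<^bsub>wreath A B\<^esub> (n::nat)) = snd w [^]\<^bsub>B\<^esub> n"
  by (induction n) (simp_all add: wreath_mult_snd)

lemma wreath_pow_base:
  assumes "group A" "group B" "g \<in> carrier B \<rightarrow>\<^sub>E carrier A"
  shows "(g, \<one>\<^bsub>B\<^esub>) [^]\<^bsub>wreath A B\<^esub> (n::nat) = ((\<lambda>c\<in>carrier B. g c [^]\<^bsub>A\<^esub> n), \<one>\<^bsub>B\<^esub>)"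
proof (induction n)
  case 0
  then show ?case by (simp add: restrict_def)
next
  case (Suc n)
  interpret A: group A by fact
  interpret B: group B by fact
  show ?case using Suc assms(3) by (auto simp: PiE_iff intro!: restrict_ext)
qed

theorem theorem3:
  fixes A :: "('a, 'c) monoid_scheme" and B :: "('b, 'd) monoid_scheme"
    and p d :: nat
  assumes "Factorial_Ring.prime p"
    and "p_group p A" and "p_group p B"
    and "carrier A \<noteq> {\<one>\<^bsub>A\<^esub>}" and "carrier B \<noteq> {\<one>\<^bsub>B\<^esub>}"
    and "p ^ d = Max (group.ord A ` carrier A)"
  shows "avg_order B \<le> avg_order (wreath A B)
       \<and> avg_order (wreath A B) \<le> real (p ^ d) * avg_order B"
proof -
  have gA: "group A" and fA: "finite (carrier A)" and kA: "\<exists>k. card (carrier A) = p ^ k"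
    using assms(2) by (auto simp: p_group_def)
  have gB: "group B" and fB: "finite (carrier B)"
    using assms(3) by (auto simp: p_group_def)
  interpret A: group A by fact
  interpret B: group B by fact
  define W where "W = wreath A B"
  interpret W: group W unfolding W_def by (rule wreath_group[OF gA gB])
  define K where "K = carrier B \<rightarrow>\<^sub>E carrier A"
  have cW: "carrier W = K \<times> carrier B" by (simp add: W_def K_def)
  have fK: "finite K" unfolding K_def using fA fB by (simp add: finite_PiE)
  have "(\<lambda>c\<in>carrier B. \<one>\<^bsub>A\<^esub>) \<in> K" unfolding K_def by auto
  then have neK: "K \<noteq> {}" by blast
  have fW: "finite (carrier W)" using cW fK fB by simp
  have p1: "p > 1" using assms(1) prime_gt_1_nat by blast
  have ordA: "A.ord a dvd p ^ d" if a: "a \<in> carrier A" for a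
  proof -
    obtain k where k: "card (carrier A) = p ^ k" using kA by blast
    have "A.ord a dvd p ^ k" using A.ord_dvd_group_order[OF a] k by (simp add: order_def)
    then obtain i where i: "A.ord a = p ^ i" using divides_primepow_nat[OF assms(1)] by blast
    have "A.ord a \<le> p ^ d" unfolding assms(6) by (rule Max_ge) (use a fA in auto)
    then have "i \<le> d" using i p1 power_le_imp_le_exp by metis
    then show ?thesis using i le_imp_power_dvd by simp
  qed
  have lo: "B.ord (snd w) \<le> W.ord w" if w: "w \<in> carrier W" for w
  proof -
    have "snd w [^]\<^bsub>B\<^esub> W.ord w = \<one>\<^bsub>B\<^esub>"
      using wreath_pow_snd[of A B w "W.ord w"] W.pow_ord_eq_1[OF w] by (simp add: W_def)
    then have "B.ord (snd w) dvd W.ord w" using w cW B.pow_eq_id by auto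
    moreover have "W.ord w \<ge> 1" using W.ord_ge_1[OF fW w] .
    ultimately show ?thesis by (simp add: dvd_imp_le)
  qed
  have hi: "W.ord w \<le> p ^ d * B.ord (snd w)" if w: "w \<in> carrier W" for w
  proof -
    define n where "n = B.ord (snd w)"
    have sw: "snd w \<in> carrier B" using w unfolding cW mem_Times_iff by blast
    have n1: "n \<ge> 1" unfolding n_def using B.ord_ge_1[OF fB sw] .
    have wn: "w [^]\<^bsub>W\<^esub> n \<in> carrier W" by (rule W.nat_pow_closed[OF w])
    have "snd (w [^]\<^bsub>W\<^esub> n) = snd w [^]\<^bsub>B\<^esub> n"
      using wreath_pow_snd[of A B w n] unfolding W_def .
    also have "\<dots> = \<one>\<^bsub>B\<^esub>" unfolding n_def by (rule B.pow_ord_eq_1[OF sw])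
    finally have "snd (w [^]\<^bsub>W\<^esub> n) = \<one>\<^bsub>B\<^esub>" .
    then obtain g where g: "w [^]\<^bsub>W\<^esub> n = (g, \<one>\<^bsub>B\<^esub>)" and gK: "g \<in> K"
      using wn cW by (metis mem_Sigma_iff prod.collapse)
    have "(g, \<one>\<^bsub>B\<^esub>) [^]\<^bsub>W\<^esub> (p ^ d) = ((\<lambda>c\<in>carrier B. g c [^]\<^bsub>A\<^esub> (p ^ d)), \<one>\<^bsub>B\<^esub>)"
      using wreath_pow_base[OF gA gB, of g] gK by (simp add: W_def K_def)
    also have "\<dots> = \<one>\<^bsub>W\<^esub>"
      using gK ordA A.pow_eq_id by (auto simp: W_def K_def PiE_iff intro!: restrict_ext)
    finally have "(w [^]\<^bsub>W\<^esub> n) [^]\<^bsub>W\<^esub> (p ^ d) = \<one>\<^bsub>W\<^esub>"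
      using g by simp
    then have "w [^]\<^bsub>W\<^esub> (n * p ^ d) = \<one>\<^bsub>W\<^esub>"
      using W.nat_pow_pow[OF w] by simp
    then have "W.ord w dvd n * p ^ d" using W.pow_eq_id[OF w] by simp
    moreover have "n * p ^ d > 0" using n1 p1 by simp
    ultimately show ?thesis unfolding n_def by (metis dvd_imp_le mult.commute)
  qed
  define SB where "SB = (\<Sum>x\<in>carrier B. real (B.ord x))"
  define SW where "SW = (\<Sum>w\<in>carrier W. real (W.ord w))"
  have sumsnd: "(\<Sum>w\<in>carrier W. real (B.ord (snd w))) = real (card K) * SB"
  proof -
    have "(\<Sum>w\<in>carrier W. real (B.ord (snd w))) = (\<Sum>f\<in>K. \<Sum>x\<in>carrier B. real (B.ord x))"
      unfolding cW by (simp add: sum.cartesian_product')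
    then show ?thesis by (simp add: SB_def)
  qed
  have SWlo: "real (card K) * SB \<le> SW"
    unfolding SW_def sumsnd[symmetric] by (rule sum_mono) (use lo in auto)
  have SWhi: "SW \<le> real (p ^ d) * (real (card K) * SB)"
  proof -
    have "SW \<le> (\<Sum>w\<in>carrier W. real (p ^ d) * real (B.ord (snd w)))"
      unfolding SW_def by (rule sum_mono) (metis hi of_nat_le_iff of_nat_mult)
    also have "\<dots> = real (p ^ d) * (real (card K) * SB)"
      by (simp add: sum_distrib_left[symmetric] sumsnd)
    finally show ?thesis .
  qed
  have cardW: "card (carrier W) = card K * card (carrier B)" using cW by (simp add: card_cartesian_product)
  have cK: "real (card K) > 0" using fK neK by (simp add: card_gt_0_iff)
  have cB: "real (card (carrier B)) > 0" using fB B.one_closed by (auto simp: card_gt_0_iff)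
  have avB: "avg_order B = SB / real (card (carrier B))" by (simp add: avg_order_def SB_def)
  have avW: "avg_order (wreath A B) = SW / (real (card K) * real (card (carrier B)))"
    by (simp add: avg_order_def SW_def cardW flip: W_def)
  show ?thesis unfolding avB avW using SWlo SWhi cK cB
    by (auto simp: field_simps)
qed

end
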